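(* Let $p,q$ be positive integers with $p/q\ge2$, let $G$ be a connected graph with a fixed orientation, and let $f,g$ be two $(p,q)$-colourings of $G$. Then there is a sequence of $(p,q)$-colourings $f=f_0,f_1,\dots,f_n$, each obtained from its predecessor by a vertex set recolouring, such that for some constant $k$ we have $f_n(v)\equiv g(v)+k\pmod p$ for all vertices $v$, if and only if $\varphi_f(C)=\varphi_g(C)$ for every cycle $C$ of $G$.
   Context: A $(p,q)$-colouring of $G$ is a map $f:V(G)\to\{0,\dots,p-1\}$ with $q\le|f(u)-f(v)|\le p-q$ for every edge $uv$. For a fixed orientation $\overrightarrow{G}$, $\varphi_f(e)=f(v)-f(u)\bmod p$ for each arc $e=\overrightarrow{uv}$. For a cycle $C$ with a chosen traversal direction, with $C^+$ the edges oriented along the traversal and $C^-$ the others, $\varphi_f(C)=\sum_{e\in C^+}\varphi_f(e)+\sum_{e\in C^-}(p-\varphi_f(e))$ (in $\mathbb{Z}$). For $\emptyset\ne X\subsetneq V(G)$ let $\partial^+(X)$ (resp. $\partial^-(X)$) be the arcs from $X$ to $V(G)\setminus X$ (resp. from $V(G)\setminus X$ to $X$). A vertex set recolouring of $f$ (recolouring $X$ by $\alpha$), for $\emptyset\neq X\subsetneq V(G)$ and an integer $1\le\alpha\le p-1$ with $\varphi_f(e)\ge q+\alpha$ for all $e\in\partial^+(X)$ and $\varphi_f(e)\le p-q-\alpha$ for all $e\in\partial^-(X)$, produces the colouring $f'$ with $f'(v)=f(v)+\alpha\bmod p$ for $v\in X$ and $f'(v)=f(v)$ otherwise. *)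

theory Defs
  imports Complex_Main "HOL-Number_Theory.Cong"
begin

text \<open>An oriented (simple) graph: finite vertex set V and arc set A.
 Each edge uv of the underlying simple graph is represented by exactly one arc.\<close>
definition oriented_graph :: "'a set \<Rightarrow> ('a \<times> 'a) set \<Rightarrow> bool" where
  "oriented_graph V A \<longleftrightarrow> finite V \<and> A \<subseteq> V \<times> V \<and>
     (\<forall>u v. (u, v) \<in> A \<longrightarrow> u \<noteq> v \<and> (v, u) \<notin> A)"

definition connected_graph :: "'a set \<Rightarrow> ('a \<times> 'a) set \<Rightarrow> bool" where
  "connected_graph V A \<longleftrightarrow> V \<noteq> {} \<and> (\<forall>u\<in>V. \<forall>v\<in>V. (u, v) \<in> (A \<union> A\<inverse>)\<^sup>*)"

definition pq_colouring :: "int \<Rightarrow> int \<Rightarrow> 'a set \<Rightarrow> ('a \<times> 'a) set \<Rightarrow> ('a \<Rightarrow> int) \<Rightarrow> bool" where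
  "pq_colouring p q V A f \<longleftrightarrow> (\<forall>v\<in>V. 0 \<le> f v \<and> f v \<le> p - 1) \<and>
     (\<forall>(u, v)\<in>A. q \<le> \<bar>f u - f v\<bar> \<and> \<bar>f u - f v\<bar> \<le> p - q)"

definition phi_arc :: "int \<Rightarrow> ('a \<Rightarrow> int) \<Rightarrow> 'a \<times> 'a \<Rightarrow> int" where
  "phi_arc p f e = (f (snd e) - f (fst e)) mod p"

definition is_cycle :: "'a set \<Rightarrow> ('a \<times> 'a) set \<Rightarrow> 'a list \<Rightarrow> bool" where
  "is_cycle V A vs \<longleftrightarrow> length vs \<ge> 3 \<and> distinct vs \<and> set vs \<subseteq> V \<and>
     (\<forall>i < length vs. (vs ! i, vs ! ((i + 1) mod length vs)) \<in> A \<union> A\<inverse>)"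

definition phi_cycle :: "int \<Rightarrow> ('a \<times> 'a) set \<Rightarrow> ('a \<Rightarrow> int) \<Rightarrow> 'a list \<Rightarrow> int" where
  "phi_cycle p A f vs = (\<Sum>i<length vs.
     (let x = vs ! i; y = vs ! ((i + 1) mod length vs) in
      if (x, y) \<in> A then phi_arc p f (x, y) else p - phi_arc p f (y, x)))"

definition out_arcs :: "('a \<times> 'a) set \<Rightarrow> 'a set \<Rightarrow> ('a \<times> 'a) set" where
  "out_arcs A X = {(u, v) \<in> A. u \<in> X \<and> v \<notin> X}"

definition in_arcs :: "('a \<times> 'a) set \<Rightarrow> 'a set \<Rightarrow> ('a \<times> 'a) set" where
  "in_arcs A X = {(u, v) \<in> A. u \<notin> X \<and> v \<in> X}"

definition vs_recolouring :: "int \<Rightarrow> int \<Rightarrow> 'a set \<Rightarrow> ('a \<times> 'a) set \<Rightarrow>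
    ('a \<Rightarrow> int) \<Rightarrow> ('a \<Rightarrow> int) \<Rightarrow> bool" where
  "vs_recolouring p q V A f f' \<longleftrightarrow> (\<exists>X \<alpha>. X \<noteq> {} \<and> X \<subset> V \<and> 1 \<le> \<alpha> \<and> \<alpha> \<le> p - 1 \<and>
     (\<forall>e\<in>out_arcs A X. phi_arc p f e \<ge> q + \<alpha>) \<and>
     (\<forall>e\<in>in_arcs A X. phi_arc p f e \<le> p - q - \<alpha>) \<and>
     f' = (\<lambda>v. if v \<in> X then (f v + \<alpha>) mod p else f v))"

end

theory Submission
  imports Defs
begin

fun wsum :: "('a \<Rightarrow> 'a \<Rightarrow> int) \<Rightarrow> 'a list \<Rightarrow> int" where
  "wsum w (x # y # r) = w x y + wsum w (y # r)"
| "wsum w _ = 0"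

fun awalk :: "('a \<times> 'a) set \<Rightarrow> 'a list \<Rightarrow> bool" where
  "awalk R (x # y # r) = ((x, y) \<in> R \<and> awalk R (y # r))"
| "awalk R _ = True"

lemma wsum_append: "wsum w (l1 @ z # l2) = wsum w (l1 @ [z]) + wsum w (z # l2)"
  by (induction l1 rule: induct_list012) auto

lemma awalk_append: "awalk R (l1 @ z # l2) \<longleftrightarrow> awalk R (l1 @ [z]) \<and> awalk R (z # l2)"
  by (induction l1 rule: induct_list012) auto

lemma wsum_conv: "wsum w xs = (\<Sum>i<length xs - 1. w (xs!i) (xs!Suc i))"
  by (induction w xs rule: wsum.induct) (auto simp: sum.lessThan_Suc_shift simp del: sum.lessThan_Suc)

lemma awalk_conv: "awalk R xs \<longleftrightarrow> (\<forall>i. Suc i < length xs \<longrightarrow> (xs!i, xs!Suc i) \<in> R)"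
proof (induction R xs rule: awalk.induct)
  case (1 R x y r)
  show ?case
  proof
    assume a: "awalk R (x # y # r)"
    show "\<forall>i. Suc i < length (x # y # r) \<longrightarrow> ((x # y # r) ! i, (x # y # r) ! Suc i) \<in> R"
    proof (intro allI impI)
      fix i assume "Suc i < length (x # y # r)"
      then show "((x # y # r) ! i, (x # y # r) ! Suc i) \<in> R"
        using a 1 by (cases i) auto
    qed
  next
    assume a: "\<forall>i. Suc i < length (x # y # r) \<longrightarrow> ((x # y # r) ! i, (x # y # r) ! Suc i) \<in> R"
    have "(x,y) \<in> R" using a[rule_format, of 0] by simp
    moreover have "awalk R (y # r)" using 1
    proof -
      have "\<forall>i. Suc i < length (y # r) \<longrightarrow> ((y # r) ! i, (y # r) ! Suc i) \<in> R"
        using a[rule_format, of "Suc _"] by simp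
      then show ?thesis using 1 by blast
    qed
    ultimately show "awalk R (x # y # r)" by simp
  qed
qed auto

lemma shift_sum: "0 < (n::nat) \<Longrightarrow> (\<Sum>i<n. F ((i+1) mod n)) = (\<Sum>i<n. (F i :: int))"
proof -
  assume "0 < n"
  then obtain m where n: "n = Suc m" by (cases n) auto
  have "(\<Sum>i<Suc m. F ((i+1) mod Suc m)) = (\<Sum>i<m. F ((i+1) mod Suc m)) + F 0"
    by (simp add: sum.lessThan_Suc)
  also have "(\<Sum>i<m. F ((i+1) mod Suc m)) = (\<Sum>i<m. F (Suc i))"
    by (rule sum.cong) auto
  also have "(\<Sum>i<m. F (Suc i)) + F 0 = (\<Sum>i<Suc m. F i)"
    by (simp only: sum.lessThan_Suc_shift)
  finally show ?thesis using n by simp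
qed

lemma closed_walk_zero:
  assumes anti: "\<And>x y. (x,y) \<in> R \<Longrightarrow> w y x = - w x y"
    and irr: "\<And>x. (x,x) \<notin> R"
    and cyc: "\<And>C. length C \<ge> 3 \<Longrightarrow> distinct C \<Longrightarrow> set C \<subseteq> V \<Longrightarrow>
       (\<forall>i<length C. (C!i, C!((i+1) mod length C)) \<in> R) \<Longrightarrow>
       (\<Sum>i<length C. w (C!i) (C!((i+1) mod length C))) = 0"
  shows "awalk R xs \<Longrightarrow> set xs \<subseteq> V \<Longrightarrow> xs \<noteq> [] \<Longrightarrow> hd xs = last xs \<Longrightarrow> wsum w xs = 0"
proof (induction "length xs" arbitrary: xs rule: less_induct)
  case less
  obtain x ys where xs: "xs = x # ys" using less.prems(3) by (cases xs) auto
  show ?case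
  proof (cases "ys = []")
    case True then show ?thesis using xs by simp
  next
    case ne: False
    have lys: "last ys = x" using less.prems(4) xs ne by simp
    show ?thesis
    proof (cases "distinct ys")
      case dist: True
      define k where "k = length ys"
      have kpos: "k \<ge> 1" using ne k_def by (cases ys) auto
      have wk: "\<forall>i. Suc i < Suc k \<longrightarrow> (xs!i, xs!Suc i) \<in> R"
        using less.prems(1) xs k_def by (simp add: awalk_conv)
      show ?thesis
      proof (cases "k \<le> 2")
        case True
        then have "k = 1 \<or> k = 2" using kpos by auto
        then show ?thesis
        proof
          assume "k = 1"
          then obtain y where "ys = [y]" using k_def by (cases ys) auto
          then have "ys = [x]" using lys by simp
          then show ?thesis using less.prems(1) xs irr by simp
        next
          assume "k = 2"
          then obtain y z where "ys = [y, z]" using k_def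
            by (cases ys; cases "tl ys") auto
          then have ys: "ys = [y, x]" using lys by simp
          then have "(x, y) \<in> R" using less.prems(1) xs by simp
          then show ?thesis using xs ys anti by simp
        qed
      next
        case False
        then have k3: "k \<ge> 3" by simp
        have cy: "\<forall>i<k. (ys!i, ys!((i+1) mod k)) \<in> R"
        proof (intro allI impI)
          fix i assume i: "i < k"
          show "(ys!i, ys!((i+1) mod k)) \<in> R"
          proof (cases "i + 1 < k")
            case True
            then have "(xs!Suc i, xs!Suc (Suc i)) \<in> R" using wk by simp
            then show ?thesis using True xs by simp
          next
            case False
            then have i': "i = k - 1" using i by simp
            have "ys!i = x" using i' lys ne k_def by (simp add: last_conv_nth)
            moreover have "(i+1) mod k = 0" using i' kpos by simp
            moreover have "(xs!0, xs!Suc 0) \<in> R" using wk kpos by simp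
            ultimately show ?thesis using xs by simp
          qed
        qed
        have z: "(\<Sum>i<k. w (ys!i) (ys!((i+1) mod k))) = 0"
          using cyc[of ys] k3 dist cy less.prems(2) xs k_def by auto
        have kk: "Suc (k-1) = k" using kpos by simp
        have "wsum w xs = (\<Sum>i<Suc (k-1). w (xs!i) (xs!Suc i))"
          unfolding kk using xs k_def by (simp add: wsum_conv del: sum.lessThan_Suc)
        also have "\<dots> = w x (ys!0) + (\<Sum>i<k-1. w (ys!i) (ys!Suc i))"
          using xs by (simp add: sum.lessThan_Suc_shift del: sum.lessThan_Suc)
        also have "\<dots> = (\<Sum>i<k. w (ys!i) (ys!((i+1) mod k)))"
        proof -
          have "(\<Sum>i<k. w (ys!i) (ys!((i+1) mod k))) = (\<Sum>i<Suc (k-1). w (ys!i) (ys!((i+1) mod k)))"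
            using kpos by simp
          also have "\<dots> = (\<Sum>i<k-1. w (ys!i) (ys!((i+1) mod k))) + w (ys!(k-1)) (ys!((k-1+1) mod k))"
            by (simp only: sum.lessThan_Suc)
          also have "(\<Sum>i<k-1. w (ys!i) (ys!((i+1) mod k))) = (\<Sum>i<k-1. w (ys!i) (ys!Suc i))"
            by (rule sum.cong) auto
          also have "ys!(k-1) = x" using lys ne k_def by (simp add: last_conv_nth)
          also have "(k-1+1) mod k = 0" using kpos by simp
          finally show ?thesis by simp
        qed
        finally show ?thesis using z by simp
      qed
    next
      case nd: False
      then obtain a z b c where ys: "ys = a @ [z] @ b @ [z] @ c"
        using not_distinct_decomp by blast
      have xs2: "xs = (x # a) @ z # (b @ z # c)" using xs ys by simp
      have aw: "awalk R ((x # a) @ [z])" "awalk R (z # b @ z # c)"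
        using less.prems(1) xs2 awalk_append by metis+
      have aw2: "awalk R ((z # b) @ [z])" "awalk R (z # c)"
        using aw(2) awalk_append[of R "z # b" z c] by auto
      have W1: "wsum w ((x # a) @ z # c) = 0"
      proof (rule less.hyps)
        show "length ((x # a) @ z # c) < length xs" using xs2 by simp
        show "awalk R ((x # a) @ z # c)" using aw(1) aw2(2) awalk_append by metis
        show "set ((x # a) @ z # c) \<subseteq> V" using less.prems(2) xs2 by auto
        show "(x # a) @ z # c \<noteq> []" by simp
        have "last (z # c) = x" using lys ys by (simp add: last_append)
        then show "hd ((x # a) @ z # c) = last ((x # a) @ z # c)" by simp
      qed
      have W2: "wsum w ((z # b) @ [z]) = 0"
      proof (rule less.hyps)
        show "length ((z # b) @ [z]) < length xs" using xs2 by simp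
        show "awalk R ((z # b) @ [z])" using aw2(1) .
        show "set ((z # b) @ [z]) \<subseteq> V" using less.prems(2) xs2 by auto
      qed auto
      have "wsum w xs = wsum w ((x # a) @ [z]) + wsum w (z # b @ z # c)"
        using xs2 wsum_append by metis
      also have "wsum w (z # b @ z # c) = wsum w ((z # b) @ [z]) + wsum w (z # c)"
        using wsum_append[of w "z # b" z c] by simp
      also have "wsum w ((x # a) @ [z]) = wsum w ((x # a) @ z # c) - wsum w (z # c)"
        using wsum_append[of w "x # a" z c] by simp
      finally show ?thesis using W1 W2 by simp
    qed
  qed
qed


definition wdiff :: "int \<Rightarrow> ('a \<times> 'a) set \<Rightarrow> ('a \<Rightarrow> int) \<Rightarrow> ('a \<Rightarrow> int) \<Rightarrow> 'a \<Rightarrow> 'a \<Rightarrow> int" where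
  "wdiff p A a b x y = (if (x, y) \<in> A then phi_arc p a (x, y) - phi_arc p b (x, y)
                        else phi_arc p b (y, x) - phi_arc p a (y, x))"

lemma phi_cycle_diff:
  "phi_cycle p A a C - phi_cycle p A b C =
   (\<Sum>i<length C. wdiff p A a b (C!i) (C!((i+1) mod length C)))"
  unfolding phi_cycle_def wdiff_def sum_subtractf[symmetric]
  by (rule sum.cong) (auto simp: Let_def)

lemma pot_cycle:
  assumes pot: "\<forall>u v. (u, v) \<in> A \<longrightarrow> phi_arc p a (u, v) - phi_arc p b (u, v) = h v - h u"
    and cyc: "is_cycle V A C"
  shows "phi_cycle p A a C = phi_cycle p A b C"
proof -
  let ?n = "length C"
  have n: "0 < ?n" using cyc unfolding is_cycle_def by auto
  have "phi_cycle p A a C - phi_cycle p A b C =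
     (\<Sum>i<?n. h (C!((i+1) mod ?n)) - h (C!i))"
    unfolding phi_cycle_diff
  proof (rule sum.cong)
    fix i assume "i \<in> {..<?n}"
    then have "(C!i, C!((i+1) mod ?n)) \<in> A \<union> A\<inverse>" using cyc unfolding is_cycle_def by auto
    then show "wdiff p A a b (C!i) (C!((i+1) mod ?n)) = h (C!((i+1) mod ?n)) - h (C!i)"
      using pot[rule_format, of "C!((i+1) mod ?n)" "C!i"] pot[rule_format, of "C!i" "C!((i+1) mod ?n)"]
      unfolding wdiff_def by auto
  qed simp
  also have "\<dots> = 0" using shift_sum[OF n, of "\<lambda>i. h (C!i)"] by (simp add: sum_subtractf)
  finally show ?thesis by simp
qed

lemma walk_exists:
  assumes "(x, y) \<in> (A \<union> A\<inverse>)\<^sup>*" and "y \<in> V" and "A \<subseteq> V \<times> V"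
  shows "\<exists>xs. xs \<noteq> [] \<and> hd xs = x \<and> last xs = y \<and> awalk (A \<union> A\<inverse>) xs \<and> set xs \<subseteq> V"
  using assms(1)
proof (induction rule: converse_rtrancl_induct)
  case base
  then show ?case using assms(2) by (intro exI[of _ "[y]"]) auto
next
  case (step u z)
  then obtain xs where xs: "xs \<noteq> []" "hd xs = z" "last xs = y" "awalk (A \<union> A\<inverse>) xs" "set xs \<subseteq> V"
    by blast
  then obtain t where t: "xs = z # t" by (cases xs) auto
  have "u \<in> V" using step(1) assms(3) by auto
  then show ?case using xs t step(1)
    by (intro exI[of _ "u # xs"]) auto
qed

lemma cycle_pot:
  assumes orient: "oriented_graph V A" and conn: "connected_graph V A"
    and cyc: "\<forall>C. is_cycle V A C \<longrightarrow> phi_cycle p A a C = phi_cycle p A b C"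
  shows "\<exists>h. \<forall>u v. (u, v) \<in> A \<longrightarrow> phi_arc p a (u, v) - phi_arc p b (u, v) = h v - h u"
proof -
  let ?R = "A \<union> A\<inverse>"
  let ?w = "wdiff p A a b"
  have AV: "A \<subseteq> V \<times> V" using orient unfolding oriented_graph_def by auto
  have anti: "\<And>x y. (x,y) \<in> ?R \<Longrightarrow> ?w y x = - ?w x y"
    using orient unfolding oriented_graph_def wdiff_def by auto
  have irr: "\<And>x. (x,x) \<notin> ?R"
    using orient unfolding oriented_graph_def by auto
  have cyc': "(\<Sum>i<length C. ?w (C!i) (C!((i+1) mod length C))) = 0"
    if "length C \<ge> 3" "distinct C" "set C \<subseteq> V"
       "\<forall>i<length C. (C!i, C!((i+1) mod length C)) \<in> ?R" for C
  proof -
    have "is_cycle V A C" using that unfolding is_cycle_def by auto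
    then show ?thesis using cyc phi_cycle_diff[of p A a C b] by simp
  qed
  note cw = closed_walk_zero[of ?R ?w V, OF anti irr cyc']
  obtain r where r: "r \<in> V" using conn unfolding connected_graph_def by auto
  have "\<forall>v\<in>V. \<exists>P. P \<noteq> [] \<and> hd P = r \<and> last P = v \<and> awalk ?R P \<and> set P \<subseteq> V"
    using walk_exists[OF _ _ AV] conn r unfolding connected_graph_def by blast
  then obtain P where P: "\<And>v. v \<in> V \<Longrightarrow> P v \<noteq> [] \<and> hd (P v) = r \<and> last (P v) = v \<and> awalk ?R (P v) \<and> set (P v) \<subseteq> V"
    by metis
  have "\<forall>v\<in>V. \<exists>Q. Q \<noteq> [] \<and> hd Q = v \<and> last Q = r \<and> awalk ?R Q \<and> set Q \<subseteq> V"
    using walk_exists[OF _ _ AV] conn r unfolding connected_graph_def by blast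
  then obtain Q where Q: "\<And>v. v \<in> V \<Longrightarrow> Q v \<noteq> [] \<and> hd (Q v) = v \<and> last (Q v) = r \<and> awalk ?R (Q v) \<and> set (Q v) \<subseteq> V"
    by metis
  define h where "h v = wsum ?w (P v)" for v
  show ?thesis
  proof (intro exI allI impI)
    fix u v assume uv: "(u, v) \<in> A"
    then have uV: "u \<in> V" and vV: "v \<in> V" using AV by auto
    obtain pu where pu: "P u = pu @ [u]" using P[OF uV] by (metis append_butlast_last_id)
    obtain pv where pv: "P v = pv @ [v]" using P[OF vV] by (metis append_butlast_last_id)
    obtain tq where tq: "Q v = v # tq" using Q[OF vV] by (cases "Q v") auto
    have aQ: "awalk ?R (v # tq)" using Q[OF vV] tq by simp
    have W1: "wsum ?w (pu @ u # (v # tq)) = 0"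
    proof (rule cw)
      show "awalk ?R (pu @ u # v # tq)" using awalk_append[of ?R pu u "v # tq"] P[OF uV] pu aQ uv by auto
      show "set (pu @ u # v # tq) \<subseteq> V" using P[OF uV] Q[OF vV] pu tq by auto
      show "hd (pu @ u # v # tq) = last (pu @ u # v # tq)"
        using P[OF uV] Q[OF vV] pu tq by (cases pu) auto
      show "pu @ u # v # tq \<noteq> []" by simp
    qed
    have W2: "wsum ?w (pv @ v # tq) = 0"
    proof (rule cw)
      show "awalk ?R (pv @ v # tq)" using awalk_append[of ?R pv v tq] P[OF vV] pv aQ by auto
      show "set (pv @ v # tq) \<subseteq> V" using P[OF vV] Q[OF vV] pv tq by auto
      show "hd (pv @ v # tq) = last (pv @ v # tq)"
        using P[OF vV] Q[OF vV] pv tq by (cases pv) auto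
      show "pv @ v # tq \<noteq> []" by simp
    qed
    have e1: "wsum ?w (pu @ u # v # tq) = h u + ?w u v + wsum ?w (v # tq)"
      using wsum_append[of ?w pu u "v # tq"] pu unfolding h_def by simp
    have e2: "wsum ?w (pv @ v # tq) = h v + wsum ?w (v # tq)"
      using wsum_append[of ?w pv v tq] pv unfolding h_def by simp
    have "?w u v = h v - h u" using W1 W2 e1 e2 by simp
    then show "phi_arc p a (u, v) - phi_arc p b (u, v) = h v - h u"
      using uv unfolding wdiff_def by simp
  qed
qed


lemma col_equiv:
  fixes a b p q :: int
  assumes "0 \<le> a" "a \<le> p - 1" "0 \<le> b" "b \<le> p - 1"
  shows "(q \<le> \<bar>a - b\<bar> \<and> \<bar>a - b\<bar> \<le> p - q) \<longleftrightarrow> (q \<le> (b - a) mod p \<and> (b - a) mod p \<le> p - q)"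
proof (cases "a \<le> b")
  case True
  then have "(b - a) mod p = b - a" using assms by (intro mod_pos_pos_trivial) auto
  then show ?thesis using True by auto
next
  case False
  have "(b - a) mod p = (b - a + p) mod p" by simp
  also have "\<dots> = b - a + p" using assms False by (intro mod_pos_pos_trivial) auto
  finally show ?thesis using False by auto
qed

lemma phi_col:
  assumes "pq_colouring p q V A f" "A \<subseteq> V \<times> V" "(u, v) \<in> A"
  shows "q \<le> phi_arc p f (u, v) \<and> phi_arc p f (u, v) \<le> p - q"
proof -
  have "u \<in> V" "v \<in> V" using assms by auto
  then have b: "0 \<le> f u" "f u \<le> p - 1" "0 \<le> f v" "f v \<le> p - 1" using assms(1) unfolding pq_colouring_def by auto
  have "q \<le> \<bar>f u - f v\<bar> \<and> \<bar>f u - f v\<bar> \<le> p - q" using assms unfolding pq_colouring_def by auto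
  then show ?thesis using col_equiv[OF b] unfolding phi_arc_def by simp
qed

lemma col_from_phi:
  assumes "\<forall>v\<in>V. 0 \<le> f v \<and> f v \<le> p - 1" "A \<subseteq> V \<times> V"
    and "\<And>u v. (u, v) \<in> A \<Longrightarrow> q \<le> phi_arc p f (u, v) \<and> phi_arc p f (u, v) \<le> p - q"
  shows "pq_colouring p q V A f"
  unfolding pq_colouring_def
proof (intro conjI ballI)
  fix e assume e: "e \<in> A"
  obtain u v where uv: "e = (u, v)" by (cases e)
  then have "u \<in> V" "v \<in> V" using assms e by auto
  then have b: "0 \<le> f u" "f u \<le> p - 1" "0 \<le> f v" "f v \<le> p - 1" using assms(1) by auto
  show "case e of (u, v) \<Rightarrow> q \<le> \<bar>f u - f v\<bar> \<and> \<bar>f u - f v\<bar> \<le> p - q"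
    using uv col_equiv[OF b, of q] assms(3)[of u v] e unfolding phi_arc_def by simp
qed (use assms(1) in auto)

lemma recolour_phi:
  fixes p q \<alpha> :: int
  assumes p: "0 < p" and q: "0 < q" and al: "0 \<le> \<alpha>"
    and outc: "\<forall>e\<in>out_arcs A X. phi_arc p f e \<ge> q + \<alpha>"
    and inc: "\<forall>e\<in>in_arcs A X. phi_arc p f e \<le> p - q - \<alpha>"
    and uv: "(u, v) \<in> A"
    and f': "f' = (\<lambda>v. if v \<in> X then (f v + \<alpha>) mod p else f v)"
  shows "phi_arc p f' (u, v) = phi_arc p f (u, v) + (if v \<in> X then \<alpha> else 0) - (if u \<in> X then \<alpha> else 0)"
proof -
  let ?d = "(f v - f u) mod p"
  have d: "0 \<le> ?d" "?d < p" using p by auto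
  show ?thesis
  proof (cases "u \<in> X")
    case uX: True
    show ?thesis
    proof (cases "v \<in> X")
      case True
      have "((f v + \<alpha>) mod p - (f u + \<alpha>) mod p) mod p = ((f v + \<alpha>) - (f u + \<alpha>)) mod p"
        by (rule mod_diff_eq)
      then show ?thesis using uX True f' unfolding phi_arc_def by simp
    next
      case False
      have o: "(u, v) \<in> out_arcs A X" using uX False uv unfolding out_arcs_def by auto
      have ge: "?d \<ge> q + \<alpha>" using outc o unfolding phi_arc_def by auto
      have "(f v - (f u + \<alpha>) mod p) mod p = (f v - (f u + \<alpha>)) mod p"
        by (rule mod_diff_right_eq)
      also have "\<dots> = ((f v - f u) - \<alpha>) mod p" by (simp add: algebra_simps)
      also have "\<dots> = (?d - \<alpha>) mod p" by (simp add: mod_diff_left_eq)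
      also have "\<dots> = ?d - \<alpha>" using ge d q al by (intro mod_pos_pos_trivial) auto
      finally show ?thesis using uX False f' unfolding phi_arc_def by simp
    qed
  next
    case uX: False
    show ?thesis
    proof (cases "v \<in> X")
      case True
      have i: "(u, v) \<in> in_arcs A X" using uX True uv unfolding in_arcs_def by auto
      have le: "?d \<le> p - q - \<alpha>" using inc i unfolding phi_arc_def by auto
      have "((f v + \<alpha>) mod p - f u) mod p = ((f v + \<alpha>) - f u) mod p"
        by (rule mod_diff_left_eq)
      also have "\<dots> = ((f v - f u) + \<alpha>) mod p" by (simp add: algebra_simps)
      also have "\<dots> = (?d + \<alpha>) mod p" by (simp add: mod_add_left_eq)
      also have "\<dots> = ?d + \<alpha>" using le d q al by (intro mod_pos_pos_trivial) auto
      finally show ?thesis using uX True f' unfolding phi_arc_def by simp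
    next
      case False
      then show ?thesis using uX f' unfolding phi_arc_def by simp
    qed
  qed
qed


definition reach :: "int \<Rightarrow> int \<Rightarrow> 'a set \<Rightarrow> ('a \<times> 'a) set \<Rightarrow> ('a \<Rightarrow> int) \<Rightarrow> ('a \<Rightarrow> int) \<Rightarrow> bool" where
  "reach p q V A g f \<longleftrightarrow> (\<exists>(n::nat) (fs :: nat \<Rightarrow> 'a \<Rightarrow> int). fs 0 = f \<and>
            (\<forall>i\<le>n. pq_colouring p q V A (fs i)) \<and>
            (\<forall>i<n. vs_recolouring p q V A (fs i) (fs (Suc i))) \<and>
            (\<exists>k::int. \<forall>v\<in>V. [fs n v = g v + k] (mod p)))"

lemma reach_ext:
  assumes "pq_colouring p q V A f" "vs_recolouring p q V A f f'" "reach p q V A g f'"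
  shows "reach p q V A g f"
proof -
  obtain n fs where fs: "fs 0 = f'" "\<forall>i\<le>n. pq_colouring p q V A (fs i)"
    "\<forall>i<n. vs_recolouring p q V A (fs i) (fs (Suc i))"
    "\<exists>k::int. \<forall>v\<in>V. [fs n v = g v + k] (mod p)"
    using assms(3) unfolding reach_def by blast
  define gs where "gs i = (if i = 0 then f else fs (i - 1))" for i
  have "gs 0 = f" by (simp add: gs_def)
  moreover have "\<forall>i\<le>Suc n. pq_colouring p q V A (gs i)"
  proof (intro allI impI)
    fix i assume "i \<le> Suc n"
    then show "pq_colouring p q V A (gs i)" using fs(2) assms(1) by (cases i) (auto simp: gs_def)
  qed
  moreover have "\<forall>i<Suc n. vs_recolouring p q V A (gs i) (gs (Suc i))"
  proof (intro allI impI)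
    fix i assume "i < Suc n"
    then show "vs_recolouring p q V A (gs i) (gs (Suc i))" using fs(1,3) assms(2) by (cases i) (auto simp: gs_def)
  qed
  moreover have "\<exists>k::int. \<forall>v\<in>V. [gs (Suc n) v = g v + k] (mod p)" using fs(4) by (simp add: gs_def)
  ultimately show ?thesis unfolding reach_def by blast
qed

lemma cong_prop:
  fixes t :: "'a \<Rightarrow> int"
  assumes "\<forall>u v. (u, v) \<in> A \<longrightarrow> [t u = t v] (mod p)" "(r, v) \<in> (A \<union> A\<inverse>)\<^sup>*"
  shows "[t v = t r] (mod p)"
  using assms(2)
proof (induction rule: rtrancl_induct)
  case base then show ?case by simp
next
  case (step y z)
  then have "[t z = t y] (mod p)" using assms(1) by (auto intro: cong_sym)
  then show ?case using step(3) by (rule cong_trans)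
qed

lemma back_main:
  assumes p2: "2 \<le> p" and q: "0 < q" and orient: "oriented_graph V A"
    and conn: "connected_graph V A" and gcol: "pq_colouring p q V A g"
  shows "pq_colouring p q V A f \<Longrightarrow>
    (\<forall>u v. (u, v) \<in> A \<longrightarrow> phi_arc p g (u, v) - phi_arc p f (u, v) = h v - h u) \<Longrightarrow>
    (\<forall>v\<in>V. m \<le> h v) \<Longrightarrow> (\<Sum>v\<in>V. nat (h v - m)) = N \<Longrightarrow> reach p q V A g f"
proof (induction N arbitrary: f h rule: less_induct)
  case (less N)
  have AV: "A \<subseteq> V \<times> V" and fin: "finite V" using orient unfolding oriented_graph_def by auto
  have Vne: "V \<noteq> {}" using conn unfolding connected_graph_def by auto
  define M where "M = Max (h ` V)"
  have hM: "\<And>v. v \<in> V \<Longrightarrow> h v \<le> M" unfolding M_def using fin by auto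
  have Min: "M \<in> h ` V" unfolding M_def using fin Vne by auto
  show ?case
  proof (cases "\<forall>v\<in>V. h v = M")
    case True
    obtain r where r: "r \<in> V" using Vne by auto
    have eq: "phi_arc p g (u, v) = phi_arc p f (u, v)" if "(u, v) \<in> A" for u v
    proof -
      have "u \<in> V" "v \<in> V" using that AV by auto
      then have "h u = h v" using True by simp
      then show ?thesis using less.prems(2) that by force
    qed
    have "\<forall>u v. (u, v) \<in> A \<longrightarrow> [(\<lambda>x. f x - g x) u = (\<lambda>x. f x - g x) v] (mod p)"
    proof (intro allI impI)
      fix u v assume "(u, v) \<in> A"
      then have "(g v - g u) mod p = (f v - f u) mod p" using eq unfolding phi_arc_def by simp
      then have "[g v - g u = f v - f u] (mod p)" unfolding cong_def .
      then have "[g v - g u + (f u - g v) = f v - f u + (f u - g v)] (mod p)" by (rule cong_add) simp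
      then show "[(\<lambda>x. f x - g x) u = (\<lambda>x. f x - g x) v] (mod p)" by (simp add: algebra_simps)
    qed
    then have c: "\<forall>v\<in>V. [f v - g v = f r - g r] (mod p)"
      using cong_prop[where t="\<lambda>x. f x - g x" and A=A and p=p and r=r] conn r unfolding connected_graph_def by auto
    have "\<forall>v\<in>V. [f v = g v + (f r - g r)] (mod p)"
    proof
      fix v assume "v \<in> V"
      then have "[f v - g v + g v = f r - g r + g v] (mod p)" using c by (intro cong_add) auto
      then show "[f v = g v + (f r - g r)] (mod p)" by (simp add: algebra_simps)
    qed
    then show ?thesis unfolding reach_def using less.prems(1)
      by (intro exI[of _ "0::nat"] exI[of _ "\<lambda>_. f"]) auto
  next
    case False
    then obtain v0 where v0: "v0 \<in> V" "h v0 < M" using hM by fastforce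
    define X where "X = {v \<in> V. h v = M}"
    have Xne: "X \<noteq> {}" using Min unfolding X_def by auto
    have XV: "X \<subset> V" using v0 unfolding X_def by auto
    define f' where "f' = (\<lambda>v. if v \<in> X then (f v + 1) mod p else f v)"
    define h' where "h' = (\<lambda>v. if v \<in> X then h v - 1 else h v)"
    have outc: "\<forall>e\<in>out_arcs A X. phi_arc p f e \<ge> q + 1"
    proof
      fix e assume e: "e \<in> out_arcs A X"
      then obtain u v where uv: "e = (u, v)" "(u, v) \<in> A" "u \<in> X" "v \<notin> X"
        unfolding out_arcs_def by auto
      then have "v \<in> V" using AV by auto
      then have "h v < h u" using uv hM unfolding X_def by force
      moreover have "q \<le> phi_arc p g (u, v)" using phi_col[OF gcol AV uv(2)] by simp
      ultimately show "phi_arc p f e \<ge> q + 1" using less.prems(2) uv by force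
    qed
    have inc: "\<forall>e\<in>in_arcs A X. phi_arc p f e \<le> p - q - 1"
    proof
      fix e assume e: "e \<in> in_arcs A X"
      then obtain u v where uv: "e = (u, v)" "(u, v) \<in> A" "u \<notin> X" "v \<in> X"
        unfolding in_arcs_def by auto
      then have "u \<in> V" using AV by auto
      then have "h u < h v" using uv hM unfolding X_def by force
      moreover have "phi_arc p g (u, v) \<le> p - q" using phi_col[OF gcol AV uv(2)] by simp
      ultimately show "phi_arc p f e \<le> p - q - 1" using less.prems(2) uv by force
    qed
    have rc: "vs_recolouring p q V A f f'"
      unfolding vs_recolouring_def
      using Xne XV p2 outc inc f'_def by (intro exI[of _ X] exI[of _ "1::int"]) auto
    have ph: "phi_arc p f' (u, v) = phi_arc p f (u, v) + (if v \<in> X then 1 else 0) - (if u \<in> X then 1 else 0)"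
      if "(u, v) \<in> A" for u v
      using recolour_phi[of p q 1 A X f u v f'] p2 q outc inc that f'_def by auto
    have col': "pq_colouring p q V A f'"
    proof (rule col_from_phi[OF _ AV])
      show "\<forall>v\<in>V. 0 \<le> f' v \<and> f' v \<le> p - 1"
      proof
        fix v assume "v \<in> V"
        have "(f v + 1) mod p < p" "0 \<le> (f v + 1) mod p" using p2 by auto
        then show "0 \<le> f' v \<and> f' v \<le> p - 1" using less.prems(1) \<open>v \<in> V\<close>
          unfolding f'_def pq_colouring_def by auto
      qed
    next
      fix u v assume uv: "(u, v) \<in> A"
      have a: "q \<le> phi_arc p f (u, v) \<and> phi_arc p f (u, v) \<le> p - q" using phi_col[OF less.prems(1) AV uv] .
      show "q \<le> phi_arc p f' (u, v) \<and> phi_arc p f' (u, v) \<le> p - q"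
      proof (cases "u \<in> X \<and> v \<notin> X")
        case True
        then have "(u, v) \<in> out_arcs A X" using uv unfolding out_arcs_def by auto
        then show ?thesis using outc ph[OF uv] True a by force
      next
        case F1: False
        show ?thesis
        proof (cases "u \<notin> X \<and> v \<in> X")
          case True
          then have "(u, v) \<in> in_arcs A X" using uv unfolding in_arcs_def by auto
          then show ?thesis using inc ph[OF uv] True a by force
        next
          case False
          then show ?thesis using F1 ph[OF uv] a by auto
        qed
      qed
    qed
    have pot': "\<forall>u v. (u, v) \<in> A \<longrightarrow> phi_arc p g (u, v) - phi_arc p f' (u, v) = h' v - h' u"
      using ph less.prems(2) unfolding h'_def by auto
    have mh': "\<forall>v\<in>V. m \<le> h' v"
    proof
      fix v assume v: "v \<in> V"
      show "m \<le> h' v"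
      proof (cases "v \<in> X")
        case True
        then have "h v = M" unfolding X_def by auto
        then show ?thesis using v0 less.prems(3) True unfolding h'_def by force
      qed (use less.prems(3) v in \<open>auto simp: h'_def\<close>)
    qed
    have lt: "(\<Sum>v\<in>V. nat (h' v - m)) < N"
      unfolding less.prems(4)[symmetric]
    proof (rule sum_strict_mono_ex1[OF fin])
      show "\<forall>x\<in>V. nat (h' x - m) \<le> nat (h x - m)" unfolding h'_def by auto
      obtain x where x: "x \<in> X" using Xne by auto
      then have "x \<in> V" "h x = M" unfolding X_def by auto
      moreover have "m \<le> h v0" using less.prems(3) v0 by auto
      ultimately show "\<exists>x\<in>V. nat (h' x - m) < nat (h x - m)"
        using x v0 unfolding h'_def by (intro bexI[of _ x]) auto
    qed
    have "reach p q V A g f'" using less.IH[OF lt col' pot' mh'] by simp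
    then show ?thesis using reach_ext[OF less.prems(1) rc] by simp
  qed
qed


lemma rec_pot:
  assumes p: "0 < p" and q: "0 < q" and r: "vs_recolouring p q V A f f'"
  shows "\<exists>h. \<forall>u v. (u, v) \<in> A \<longrightarrow> phi_arc p f' (u, v) - phi_arc p f (u, v) = h v - h u"
proof -
  obtain X \<alpha> where X: "1 \<le> \<alpha>" "\<forall>e\<in>out_arcs A X. phi_arc p f e \<ge> q + \<alpha>"
    "\<forall>e\<in>in_arcs A X. phi_arc p f e \<le> p - q - \<alpha>"
    "f' = (\<lambda>v. if v \<in> X then (f v + \<alpha>) mod p else f v)"
    using r unfolding vs_recolouring_def by blast
  show ?thesis
    using recolour_phi[OF p q _ X(2) X(3) _ X(4)] X(1)
    by (intro exI[of _ "\<lambda>x. if x \<in> X then \<alpha> else 0"]) auto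
qed

theorem corollary2p5:
  fixes p q :: int and V :: "'a set" and A :: "('a \<times> 'a) set" and f g :: "'a \<Rightarrow> int"
  assumes "0 < p" and "0 < q" and "real_of_int p / real_of_int q \<ge> 2"
    and "oriented_graph V A" and "connected_graph V A"
    and "pq_colouring p q V A f" and "pq_colouring p q V A g"
  shows "(\<exists>(n::nat) (fs :: nat \<Rightarrow> 'a \<Rightarrow> int). fs 0 = f \<and>
            (\<forall>i\<le>n. pq_colouring p q V A (fs i)) \<and>
            (\<forall>i<n. vs_recolouring p q V A (fs i) (fs (Suc i))) \<and>
            (\<exists>k::int. \<forall>v\<in>V. [fs n v = g v + k] (mod p)))
         \<longleftrightarrow> (\<forall>C. is_cycle V A C \<longrightarrow> phi_cycle p A f C = phi_cycle p A g C)"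
proof -
  have "2 * real_of_int q \<le> real_of_int p" using assms(2,3) by (simp add: le_divide_eq)
  then have p2: "2 \<le> p" using assms(2) by linarith
  have AV: "A \<subseteq> V \<times> V" using assms(4) unfolding oriented_graph_def by auto
  show ?thesis
  proof
    assume "\<exists>(n::nat) (fs :: nat \<Rightarrow> 'a \<Rightarrow> int). fs 0 = f \<and>
            (\<forall>i\<le>n. pq_colouring p q V A (fs i)) \<and>
            (\<forall>i<n. vs_recolouring p q V A (fs i) (fs (Suc i))) \<and>
            (\<exists>k::int. \<forall>v\<in>V. [fs n v = g v + k] (mod p))"
    then obtain n fs k where fs: "fs 0 = f" "\<forall>i<n. vs_recolouring p q V A (fs i) (fs (Suc i))"
      "\<forall>v\<in>V. [fs n v = g v + k] (mod p)" by blast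
    have chain: "i \<le> n \<Longrightarrow> \<exists>h. \<forall>u v. (u, v) \<in> A \<longrightarrow> phi_arc p (fs i) (u, v) - phi_arc p f (u, v) = h v - h u" for i
    proof (induction i)
      case 0 then show ?case using fs(1) by (intro exI[of _ "\<lambda>_. 0"]) auto
    next
      case (Suc i)
      then obtain h where h: "\<forall>u v. (u, v) \<in> A \<longrightarrow> phi_arc p (fs i) (u, v) - phi_arc p f (u, v) = h v - h u" by auto
      obtain h2 where h2: "\<forall>u v. (u, v) \<in> A \<longrightarrow> phi_arc p (fs (Suc i)) (u, v) - phi_arc p (fs i) (u, v) = h2 v - h2 u"
        using rec_pot[OF assms(1,2)] fs(2) Suc.prems by (meson Suc_le_lessD)
      show ?case using h h2 by (intro exI[of _ "\<lambda>x. h x + h2 x"]) force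
    qed
    obtain h where h: "\<forall>u v. (u, v) \<in> A \<longrightarrow> phi_arc p (fs n) (u, v) - phi_arc p f (u, v) = h v - h u"
      using chain by blast
    have e: "phi_arc p (fs n) (u, v) = phi_arc p g (u, v)" if "(u, v) \<in> A" for u v
    proof -
      have "u \<in> V" "v \<in> V" using that AV by auto
      then have c: "fs n u mod p = (g u + k) mod p" "fs n v mod p = (g v + k) mod p"
        using fs(3) unfolding cong_def by auto
      have "(fs n v - fs n u) mod p = (fs n v mod p - fs n u mod p) mod p" by (simp add: mod_diff_eq)
      also have "\<dots> = ((g v + k) mod p - (g u + k) mod p) mod p" using c by simp
      also have "\<dots> = ((g v + k) - (g u + k)) mod p" by (simp add: mod_diff_eq)
      finally show ?thesis unfolding phi_arc_def by simp
    qed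
    have pot: "\<forall>u v. (u, v) \<in> A \<longrightarrow> phi_arc p g (u, v) - phi_arc p f (u, v) = h v - h u"
      using h e by auto
    show "\<forall>C. is_cycle V A C \<longrightarrow> phi_cycle p A f C = phi_cycle p A g C"
      using pot_cycle[OF pot] by (metis)
  next
    assume cyc: "\<forall>C. is_cycle V A C \<longrightarrow> phi_cycle p A f C = phi_cycle p A g C"
    then have cyc': "\<forall>C. is_cycle V A C \<longrightarrow> phi_cycle p A g C = phi_cycle p A f C" by auto
    obtain h where h: "\<forall>u v. (u, v) \<in> A \<longrightarrow> phi_arc p g (u, v) - phi_arc p f (u, v) = h v - h u"
      using cycle_pot[OF assms(4,5) cyc'] by blast
    have fin: "finite V" using assms(4) unfolding oriented_graph_def by auto
    have "\<forall>v\<in>V. Min (h ` V) \<le> h v" using fin by auto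
    then have "reach p q V A g f"
      using back_main[OF p2 assms(2,4,5,7) assms(6) h] by blast
    then show "\<exists>(n::nat) (fs :: nat \<Rightarrow> 'a \<Rightarrow> int). fs 0 = f \<and>
            (\<forall>i\<le>n. pq_colouring p q V A (fs i)) \<and>
            (\<forall>i<n. vs_recolouring p q V A (fs i) (fs (Suc i))) \<and>
            (\<exists>k::int. \<forall>v\<in>V. [fs n v = g v + k] (mod p))" unfolding reach_def .
  qed
qed

end
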